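(* There is an absolute constant $C$ such that for every $T\ge 3$, the algorithm BM-log run with $K=(T/\log T)^{1/3}$ (taken to be an integer $\ge2$) guarantees, against every oblivious adversary sequence $y_1,\dots,y_T\in\{0,1\}$, $$\mathsf{PKLCal}\le C\,T^{1/3}(\log T)^{2/3}.$$
   Context: Forecasting protocol: for $t=1,\dots,T$, the forecaster outputs a distribution $\mathcal{P}_t$ over a finite set $\mathcal{Z}\subset[0,1]$ and draws its prediction from it; simultaneously the adversary (which fixes $y_1,\dots,y_T$ in advance) chooses $y_t\in\{0,1\}$, then revealed. Log loss $\ell(w,y)=-y\log w-(1-y)\log(1-w)$. Bernoulli KL $\mathsf{KL}(q,p)=q\log\frac qp+(1-q)\log\frac{1-q}{1-p}$; $\tilde\rho_p=\frac{\sum_t y_t\mathcal{P}_t(p)}{\sum_t\mathcal{P}_t(p)}$ ($0/0=0$); $\mathsf{PKLCal}:=\sum_{p\in\mathcal{Z}}\sum_t\mathcal{P}_t(p)\mathsf{KL}(\tilde\rho_p,p)$. Algorithm BM-log with integer parameter $K\ge2$: $\mathcal{Z}=\{z_0,\dots,z_K\}$ with $z_0=\sin^2\frac{\pi}{4K}$, $z_i=\sin^2\frac{\pi i}{2K}$ ($1\le i\le K-1$), $z_K=\cos^2\frac{\pi}{4K}$. Rounding $\mathrm{RROUND}(w)$ for $w\in[0,1]$: if $w\in[z_i,z_{i+1})$ for some $i\in\{0,\dots,K-1\}$, output the distribution $q$ on $\mathcal{Z}$ with $q_i=\frac1D\frac{z_{i+1}-w}{z_{i+1}(1-z_{i+1})}$,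 $q_{i+1}=\frac1D\frac{w-z_i}{z_i(1-z_i)}$, $q_j=0$ otherwise, $D$ the normalizing constant; if $w<z_0$ output the point mass at $z_0$, if $w\ge z_K$ the point mass at $z_K$. At round $t$, for each $i\in\{0,\dots,K\}$ let $\mu_{t,i}(w)=\exp\big(-\sum_{\tau<t}\pi_{\tau,i}\,\ell(w,y_\tau)\big)$, $w_{t,i}=\frac{\int_0^1 w\mu_{t,i}(w)dw}{\int_0^1\mu_{t,i}(w)dw}$ and $q_{t,i}=\mathrm{RROUND}(w_{t,i})$. Let $Q_t$ be the $(K+1)\times(K+1)$ matrix with columns $q_{t,0},\dots,q_{t,K}$, compute a probability vector $\pi_t$ with $Q_t\pi_t=\pi_t$, output $\mathcal{P}_t(z_i)=\pi_{t,i}$, draw the prediction from $\mathcal{P}_t$, and observe $y_t$. *)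

theory Defs
  imports "HOL-Analysis.Analysis"
begin

definition zgrid :: "nat \<Rightarrow> nat \<Rightarrow> real" where
  "zgrid K i =
     (if i = 0 then (sin (pi / (4 * real K)))^2
      else if i < K then (sin (pi * real i / (2 * real K)))^2
      else (cos (pi / (4 * real K)))^2)"

definition logloss :: "real \<Rightarrow> real \<Rightarrow> real" where
  "logloss w y = - y * ln w - (1 - y) * ln (1 - w)"

definition bernKL :: "real \<Rightarrow> real \<Rightarrow> real" where
  "bernKL q p = q * ln (q / p) + (1 - q) * ln ((1 - q) / (1 - p))"

text \<open>Randomized rounding RROUND(w): a distribution on indices 0..K (index j stands for z_j).\<close>
definition rround :: "nat \<Rightarrow> real \<Rightarrow> nat \<Rightarrow> real" where
  "rround K w j =
     (if w < zgrid K 0 then (if j = 0 then 1 else 0)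
      else if zgrid K K \<le> w then (if j = K then 1 else 0)
      else
        (let i = (THE i. i < K \<and> zgrid K i \<le> w \<and> w < zgrid K (Suc i));
             a = (zgrid K (Suc i) - w) / (zgrid K (Suc i) * (1 - zgrid K (Suc i)));
             b = (w - zgrid K i) / (zgrid K i * (1 - zgrid K i))
         in if j = i then a / (a + b) else if j = Suc i then b / (a + b) else 0))"

text \<open>Unnormalised exponential-weights density mu_{t,i}(w); pi t i is the weight of z_i at round t.\<close>
definition mu_bm :: "(nat \<Rightarrow> real) \<Rightarrow> (nat \<Rightarrow> nat \<Rightarrow> real) \<Rightarrow> nat \<Rightarrow> nat \<Rightarrow> real \<Rightarrow> real" where
  "mu_bm y \<pi> t i w = exp (- (\<Sum>\<tau>\<in>{1..<t}. \<pi> \<tau> i * logloss w (y \<tau>)))"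

definition wmean_bm :: "(nat \<Rightarrow> real) \<Rightarrow> (nat \<Rightarrow> nat \<Rightarrow> real) \<Rightarrow> nat \<Rightarrow> nat \<Rightarrow> real" where
  "wmean_bm y \<pi> t i =
     integral {0..1} (\<lambda>w. w * mu_bm y \<pi> t i w) / integral {0..1} (\<lambda>w. mu_bm y \<pi> t i w)"

text \<open>\<pi> is a valid run of BM-log with parameter K on rounds 1..T against outcomes y:
  at each round t, \<pi> t is a probability vector on {0..K} that is a fixed point of Q_t,
  where column i of Q_t is RROUND(w_{t,i}) (so (Q_t \<pi>)_j = sum_i q_{t,i}(j) \<pi>_i).\<close>
definition bm_log_run :: "nat \<Rightarrow> nat \<Rightarrow> (nat \<Rightarrow> real) \<Rightarrow> (nat \<Rightarrow> nat \<Rightarrow> real) \<Rightarrow> bool" where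
  "bm_log_run K T y \<pi> \<longleftrightarrow>
     (\<forall>t\<in>{1..T}.
        (\<forall>i\<le>K. 0 \<le> \<pi> t i) \<and> (\<Sum>i\<le>K. \<pi> t i) = 1 \<and>
        (\<forall>j\<le>K. (\<Sum>i\<le>K. rround K (wmean_bm y \<pi> t i) j * \<pi> t i) = \<pi> t j))"

text \<open>Empirical frequency rho~_p for p = z_i (0/0 = 0 is HOL's division convention).\<close>
definition rho_tilde :: "nat \<Rightarrow> (nat \<Rightarrow> real) \<Rightarrow> (nat \<Rightarrow> nat \<Rightarrow> real) \<Rightarrow> nat \<Rightarrow> real" where
  "rho_tilde T y \<pi> i = (\<Sum>t\<in>{1..T}. y t * \<pi> t i) / (\<Sum>t\<in>{1..T}. \<pi> t i)"

definition PKLCal :: "nat \<Rightarrow> nat \<Rightarrow> (nat \<Rightarrow> real) \<Rightarrow> (nat \<Rightarrow> nat \<Rightarrow> real) \<Rightarrow> real" where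
  "PKLCal K T y \<pi> =
     (\<Sum>i\<le>K. \<Sum>t\<in>{1..T}. \<pi> t i * bernKL (rho_tilde T y \<pi> i) (zgrid K i))"

end

theory Submission
  imports Defs
begin

lemma integral_closed_open:
  fixes f :: "real \<Rightarrow> real"
  shows "integral {0..1} f = integral {0<..<1} f"
  by (rule integral_spike_set) (auto intro: negligible_subset[of "{0,1}"])

lemma integrable_closed_open:
  fixes f :: "real \<Rightarrow> real"
  shows "f integrable_on {0..1} \<longleftrightarrow> f integrable_on {0<..<1}"
  by (rule integrable_spike_set_eq) (auto intro: negligible_subset[of "{0,1}"])

lemma cont_bdd_integrable:
  fixes f :: "real \<Rightarrow> real"
  assumes c: "continuous_on {0<..<1} f" and b: "\<And>x. x \<in> {0<..<1} \<Longrightarrow> \<bar>f x\<bar> \<le> B"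
  shows "f integrable_on {0<..<1}"
proof -
  have ci: "(\<lambda>x. B) integrable_on {0<..<(1::real)}"
    proof -
    have "(\<lambda>x. B) integrable_on {0..(1::real)}" by (rule integrable_const_ivl)
    then show ?thesis using integrable_closed_open by blast
  qed
  have "f absolutely_integrable_on {0<..<1}"
    by (rule measurable_bounded_by_integrable_imp_absolutely_integrable[OF
          continuous_imp_measurable_on_sets_lebesgue[OF c] _ ci]) (use b in auto)
  then show ?thesis using absolutely_integrable_on_def by blast
qed


definition gfun :: "real \<Rightarrow> real \<Rightarrow> real \<Rightarrow> real" where
  "gfun a b w = exp (a * ln w + b * ln (1 - w))"

lemma gfun_pos: "0 < gfun a b w" by (simp add: gfun_def)

lemma gfun_le1:
  assumes "0 \<le> a" "0 \<le> b" "0 < w" "w < 1"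
  shows "gfun a b w \<le> 1"
proof -
  have "a * ln w \<le> 0" using assms by (simp add: mult_nonneg_nonpos)
  moreover have "b * ln (1 - w) \<le> 0" using assms by (simp add: mult_nonneg_nonpos)
  ultimately show ?thesis by (simp add: gfun_def)
qed

lemma gfun_cont: "continuous_on {0<..<1} (gfun a b)"
  unfolding gfun_def by (intro continuous_intros) auto

lemma gfun_integrable:
  assumes "0 \<le> a" "0 \<le> b"
  shows "gfun a b integrable_on {0<..<1}"
  by (rule cont_bdd_integrable[OF gfun_cont, of _ _ 1])
     (use assms gfun_le1 gfun_pos in \<open>auto simp: abs_le_iff less_imp_le\<close>)

lemma gfun_point_lower:
  assumes a: "0 \<le> a" and b: "0 \<le> b" and w: "0 < w" "w < 1"
    and cond: "(a + b) * (a / (a + b) - w)^2 \<le> w * (1 - w)"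
  shows "exp (a * ln (a / (a + b)) + b * ln (1 - a / (a + b)) - 1) \<le> gfun a b w"
proof -
  define n where "n = a + b"
  define \<rho> where "\<rho> = a / n"
  have n0: "0 \<le> n" using a b by (simp add: n_def)
  have h1: "a * (ln \<rho> - ln w) \<le> a * (\<rho> / w - 1)"
  proof (cases "a = 0")
    case False
    then have "a > 0" using a by simp
    then have "\<rho> > 0" using b by (simp add: \<rho>_def n_def)
    then have "ln \<rho> - ln w = ln (\<rho> / w)" using w by (simp add: ln_div)
    also have "\<dots> \<le> \<rho> / w - 1" using \<open>\<rho> > 0\<close> w by (intro ln_le_minus_one) simp
    finally show ?thesis using a by (simp add: mult_left_mono)
  qed simp
  have h2: "b * (ln (1 - \<rho>) - ln (1 - w)) \<le> b * ((1 - \<rho>) / (1 - w) - 1)"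
  proof (cases "b = 0")
    case False
    then have "b > 0" using b by simp
    then have "1 - \<rho> > 0" using a by (simp add: \<rho>_def n_def field_simps)
    then have "ln (1 - \<rho>) - ln (1 - w) = ln ((1 - \<rho>) / (1 - w))" using w by (simp add: ln_div)
    also have "\<dots> \<le> (1 - \<rho>) / (1 - w) - 1" using \<open>1 - \<rho> > 0\<close> w by (intro ln_le_minus_one) simp
    finally show ?thesis using b by (simp add: mult_left_mono)
  qed simp
  have key: "a * (\<rho> / w - 1) + b * ((1 - \<rho>) / (1 - w) - 1) = n * (\<rho> - w)^2 / (w * (1 - w))"
  proof (cases "n = 0")
    case True
    then have "a = 0" "b = 0" using a b n_def by auto
    then show ?thesis using True by simp
  next
    case False
    have ea: "a = n * \<rho>" using False by (simp add: \<rho>_def)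
    have eb: "b = n * (1 - \<rho>)" using False by (simp add: \<rho>_def n_def field_simps)
    have "w \<noteq> 0" "1 - w \<noteq> 0" using w by auto
    then show ?thesis unfolding ea eb by (simp add: divide_simps) (simp add: algebra_simps power2_eq_square)
  qed
  have "n * (\<rho> - w)^2 / (w * (1 - w)) \<le> 1"
    using cond w by (simp add: n_def \<rho>_def divide_le_eq)
  then have "a * ln \<rho> + b * ln (1 - \<rho>) - 1 \<le> a * ln w + b * ln (1 - w)"
    using h1 h2 key by (simp add: algebra_simps)
  then show ?thesis unfolding gfun_def \<rho>_def n_def by simp
qed


lemma gfun_interval_exists:
  fixes n \<rho> :: real
  assumes n: "0 \<le> n" and r: "0 \<le> \<rho>" "\<rho> \<le> 1"
  defines "d \<equiv> 1 / (16 * max n 1)"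
  shows "\<exists>c. 0 < c \<and> c + d < 1 \<and> (\<forall>w\<in>{c..c+d}. n * (\<rho> - w)^2 \<le> w * (1 - w))"
proof -
  have m1: "max n 1 \<ge> 1" by simp
  have d0: "0 < d" and d1: "d \<le> 1/16" using m1 by (auto simp: d_def field_simps)
  have nd: "n * (4 * d^2) \<le> d / 4"
  proof -
    have "n * (4 * d^2) \<le> max n 1 * (4 * d^2)" by (intro mult_right_mono) auto
    also have "\<dots> = d / 4" using m1 by (simp add: d_def power2_eq_square field_simps)
    finally show ?thesis .
  qed
  show ?thesis
  proof (cases "\<rho> \<le> 1/2")
    case True
    show ?thesis
    proof (intro exI[of _ "\<rho> + d"] conjI ballI)
      show "0 < \<rho> + d" using r d0 by simp
      show "\<rho> + d + d < 1" using True d1 by simp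
      fix w assume w: "w \<in> {\<rho> + d..\<rho> + d + d}"
      have sq: "(\<rho> - w)^2 \<le> 4 * d^2"
      proof -
        have "(\<rho> - w)^2 = (w - \<rho>)^2" by (simp add: power2_commute)
        also have "\<dots> \<le> (2 * d)^2" using w d0 by (intro power_mono) auto
        finally show ?thesis by (simp add: power2_eq_square)
      qed
      have "n * (\<rho> - w)^2 \<le> n * (4 * d^2)" using sq n by (intro mult_left_mono)
      also have "\<dots> \<le> d / 4" by (rule nd)
      also have "d / 4 \<le> w * (1 - w)"
      proof -
        have "d * (1/4) \<le> w * (1 - w)" using w d0 d1 True r
          by (intro mult_mono) auto
        then show ?thesis by simp
      qed
      finally show "n * (\<rho> - w)^2 \<le> w * (1 - w)" .
    qed
  next
    case False
    show ?thesis
    proof (intro exI[of _ "\<rho> - 2 * d"] conjI ballI)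
      show "0 < \<rho> - 2 * d" using False d1 by simp
      show "\<rho> - 2 * d + d < 1" using r d0 by simp
      fix w assume w: "w \<in> {\<rho> - 2 * d..\<rho> - 2 * d + d}"
      have sq: "(\<rho> - w)^2 \<le> 4 * d^2"
      proof -
        have "(\<rho> - w)^2 \<le> (2 * d)^2" using w d0 by (intro power_mono) auto
        then show ?thesis by (simp add: power2_eq_square)
      qed
      have "n * (\<rho> - w)^2 \<le> n * (4 * d^2)" using sq n by (intro mult_left_mono)
      also have "\<dots> \<le> d / 4" by (rule nd)
      also have "d / 4 \<le> w * (1 - w)"
      proof -
        have "(1/4) * d \<le> w * (1 - w)" using w d0 d1 False r
          by (intro mult_mono) auto
        then show ?thesis by simp
      qed
      finally show "n * (\<rho> - w)^2 \<le> w * (1 - w)" .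
    qed
  qed
qed

lemma gfun_integral_lower:
  assumes a: "0 \<le> a" and b: "0 \<le> b"
  shows "exp (a * ln (a / (a + b)) + b * ln (1 - a / (a + b)) - 1) / (16 * max (a + b) 1)
           \<le> integral {0<..<1} (gfun a b)"
proof -
  define E where "E = exp (a * ln (a / (a + b)) + b * ln (1 - a / (a + b)) - 1)"
  define d where "d = 1 / (16 * max (a + b) 1)"
  have r: "0 \<le> a / (a + b)" "a / (a + b) \<le> 1" using a b
    by (auto simp: divide_le_eq)
  obtain c where c: "0 < c" "c + d < 1" and cw: "\<forall>w\<in>{c..c+d}. (a + b) * (a / (a + b) - w)^2 \<le> w * (1 - w)"
    using gfun_interval_exists[of "a + b" "a / (a + b)"] a b r unfolding d_def by auto
  have d0: "0 < d" by (simp add: d_def)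
  have sub: "{c..c+d} \<subseteq> {0<..<1}" using c by auto
  have int: "gfun a b integrable_on {c..c+d}"
    by (rule integrable_on_subinterval[OF gfun_integrable[OF a b] sub])
  have "E * d = integral {c..c+d} (\<lambda>x. E)" using d0 by simp
  also have "\<dots> \<le> integral {c..c+d} (gfun a b)"
  proof (rule integral_le)
    fix x assume "x \<in> {c..c+d}"
    then show "E \<le> gfun a b x" unfolding E_def using cw c
      by (intro gfun_point_lower[OF a b]) auto
  qed (use int in auto)
  also have "\<dots> \<le> integral {0<..<1} (gfun a b)"
    by (rule integral_subset_le[OF sub int gfun_integrable[OF a b]])
       (auto intro: less_imp_le gfun_pos)
  finally show ?thesis by (simp add: E_def d_def)
qed


lemma gfun_integral_pos:
  assumes a: "0 \<le> a" and b: "0 \<le> b"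
  shows "0 < integral {0<..<1} (gfun a b)"
  by (rule less_le_trans[OF _ gfun_integral_lower[OF a b]]) simp

lemma gfun_mult_w: "w \<in> {0<..<1} \<Longrightarrow> w * gfun a b w = gfun (a + 1) b w"
  by (auto simp: gfun_def algebra_simps exp_add)

lemma gfun_mult_1w: "w \<in> {0<..<1} \<Longrightarrow> (1 - w) * gfun a b w = gfun a (b + 1) w"
  by (auto simp: gfun_def algebra_simps exp_add)

lemma gfun_powr_w: "w \<in> {0<..<1} \<Longrightarrow> gfun a b w * w powr p = gfun (a + p) b w"
  by (auto simp: gfun_def algebra_simps exp_add powr_def)

lemma gfun_powr_1w: "w \<in> {0<..<1} \<Longrightarrow> gfun a b w * (1 - w) powr p = gfun a (b + p) w"
  by (auto simp: gfun_def algebra_simps exp_add powr_def)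

lemma powr_tangent:
  fixes u m p :: real
  assumes "0 < u" "0 < m" "0 \<le> p" "p \<le> 1"
  shows "u powr p \<le> m powr p * (p * u / m + (1 - p))"
proof -
  have "(u / m) powr p * 1 powr (1 - p) \<le> p * (u / m) + (1 - p) * 1"
    by (rule Youngs_inequality_0) (use assms in auto)
  then have "(u / m) powr p \<le> p * u / m + (1 - p)" by simp
  then have "m powr p * (u / m) powr p \<le> m powr p * (p * u / m + (1 - p))"
    by (intro mult_left_mono) auto
  moreover have "m powr p * (u / m) powr p = u powr p"
    using assms by (simp add: powr_divide)
  ultimately show ?thesis by simp
qed

definition gmean :: "real \<Rightarrow> real \<Rightarrow> real" where
  "gmean a b = integral {0<..<1} (\<lambda>w. w * gfun a b w) / integral {0<..<1} (gfun a b)"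

lemma gmean_bounds:
  assumes a: "0 \<le> a" and b: "0 \<le> b"
  shows "0 < gmean a b" "gmean a b < 1"
    "integral {0<..<1} (\<lambda>w. w * gfun a b w) = gmean a b * integral {0<..<1} (gfun a b)"
    "integral {0<..<1} (\<lambda>w. (1 - w) * gfun a b w) = (1 - gmean a b) * integral {0<..<1} (gfun a b)"
proof -
  define M where "M = integral {0<..<1} (gfun a b)"
  have M: "0 < M" using gfun_integral_pos[OF a b] by (simp add: M_def)
  have e1: "integral {0<..<1} (\<lambda>w. w * gfun a b w) = integral {0<..<1} (gfun (a + 1) b)"
    by (rule integral_cong) (rule gfun_mult_w)
  have e2: "integral {0<..<1} (\<lambda>w. (1 - w) * gfun a b w) = integral {0<..<1} (gfun a (b + 1))"
    by (rule integral_cong) (rule gfun_mult_1w)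
  have i1: "(\<lambda>w. w * gfun a b w) integrable_on {0<..<1}"
    by (rule integrable_eq[OF gfun_integrable[of "a+1" b]]) (use a b gfun_mult_w in auto)
  have sum: "integral {0<..<1} (\<lambda>w. (1 - w) * gfun a b w) = M - integral {0<..<1} (\<lambda>w. w * gfun a b w)"
  proof -
    have "integral {0<..<1} (\<lambda>w. (1 - w) * gfun a b w) = integral {0<..<1} (\<lambda>w. gfun a b w - w * gfun a b w)"
      by (simp add: algebra_simps)
    also have "\<dots> = M - integral {0<..<1} (\<lambda>w. w * gfun a b w)"
      unfolding M_def by (rule integral_diff[OF gfun_integrable[OF a b] i1])
    finally show ?thesis .
  qed
  have p1: "0 < integral {0<..<1} (\<lambda>w. w * gfun a b w)" unfolding e1 using a b by (intro gfun_integral_pos) auto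
  have p2: "0 < integral {0<..<1} (\<lambda>w. (1 - w) * gfun a b w)" unfolding e2 using a b by (intro gfun_integral_pos) auto
  show "0 < gmean a b" using p1 M by (simp add: gmean_def M_def)
  show "gmean a b < 1" using p2 M sum by (simp add: gmean_def M_def divide_less_eq)
  show "integral {0<..<1} (\<lambda>w. w * gfun a b w) = gmean a b * integral {0<..<1} (gfun a b)"
    using M by (simp add: gmean_def M_def)
  then show "integral {0<..<1} (\<lambda>w. (1 - w) * gfun a b w) = (1 - gmean a b) * integral {0<..<1} (gfun a b)"
    using sum by (simp add: M_def algebra_simps)
qed

lemma jensen_gen:
  fixes G u :: "real \<Rightarrow> real" and m p M :: real
  assumes G: "G integrable_on {0<..<1}" and uG: "(\<lambda>w. u w * G w) integrable_on {0<..<1}"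
    and Gp: "(\<lambda>w. G w * u w powr p) integrable_on {0<..<1}"
    and pos: "\<And>w. w \<in> {0<..<1} \<Longrightarrow> 0 \<le> G w \<and> 0 < u w"
    and m: "0 < m" and p: "0 \<le> p" "p \<le> 1"
    and mean: "integral {0<..<1} (\<lambda>w. u w * G w) = m * integral {0<..<1} G"
  shows "integral {0<..<1} (\<lambda>w. G w * u w powr p) \<le> m powr p * integral {0<..<1} G"
proof -
  define cA where "cA = m powr p * p / m"
  define cB where "cB = m powr p * (1 - p)"
  have iA: "(\<lambda>w. cA * (u w * G w)) integrable_on {0<..<1}"
    using integrable_on_cmult_left[OF uG, of cA] by simp
  have iB: "(\<lambda>w. cB * G w) integrable_on {0<..<1}"
    using integrable_on_cmult_left[OF G, of cB] by simp
  have "integral {0<..<1} (\<lambda>w. G w * u w powr p)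
      \<le> integral {0<..<1} (\<lambda>w. cA * (u w * G w) + cB * G w)"
  proof (rule integral_le[OF Gp])
    show "(\<lambda>w. cA * (u w * G w) + cB * G w) integrable_on {0<..<1}"
      by (intro integrable_add iA iB)
    fix w :: real assume w: "w \<in> {0<..<1}"
    have "G w * u w powr p \<le> G w * (m powr p * (p * u w / m + (1 - p)))"
      using pos[OF w] by (intro mult_left_mono powr_tangent) (use m p in auto)
    also have "\<dots> = cA * (u w * G w) + cB * G w"
      by (simp add: algebra_simps cA_def cB_def)
    finally show "G w * u w powr p \<le> cA * (u w * G w) + cB * G w" .
  qed
  also have "\<dots> = cA * integral {0<..<1} (\<lambda>w. u w * G w) + cB * integral {0<..<1} G"
    by (subst integral_add[OF iA iB]) simp
  also have "\<dots> = m powr p * integral {0<..<1} G"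
    unfolding mean using m by (simp add: algebra_simps cA_def cB_def)
  finally show ?thesis .
qed


definition rr :: "nat \<Rightarrow> nat \<Rightarrow> real" where
  "rr K i = (if i = 0 then 1 / (4 * real K) else if i < K then real i / (2 * real K) else 1/2 - 1 / (4 * real K))"

definition th :: "nat \<Rightarrow> nat \<Rightarrow> real" where
  "th K i = pi * rr K i"

lemma zgrid_th: "zgrid K i = (sin (th K i))^2"
proof -
  have "cos (pi / (4 * real K)) = sin (pi * (1/2 - 1 / (4 * real K)))"
    by (simp add: cos_sin_eq right_diff_distrib)
  then show ?thesis
    by (simp add: zgrid_def th_def rr_def)
qed

lemma rr_bounds:
  assumes K: "2 \<le> K"
  shows "0 < rr K i" "rr K i < 1/2"
proof -
  have K0: "(2::real) \<le> real K" using K by simp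
  show "0 < rr K i" using K0 by (auto simp: rr_def field_simps)
  show "rr K i < 1/2"
  proof (cases "i = 0")
    case True then show ?thesis using K0 by (simp add: rr_def field_simps)
  next
    case False
    show ?thesis
    proof (cases "i < K")
      case True
      then have "real i < real K" by simp
      then show ?thesis using False True K0 by (simp add: rr_def field_simps)
    qed (use False K0 in \<open>simp add: rr_def field_simps\<close>)
  qed
qed

lemma th_bounds:
  assumes K: "2 \<le> K"
  shows "0 < th K i" "th K i < pi/2"
  using rr_bounds[OF K, of i] pi_gt_zero by (simp_all add: th_def)

lemma rr_strict:
  assumes K: "2 \<le> K" and ij: "i < j" "j \<le> K"
  shows "rr K i < rr K j"
proof -
  have K0: "(2::real) \<le> real K" using K by simp
  have iK: "real i + 1 \<le> real K" "real i + 1 \<le> real j" "real j \<le> real K" using ij by auto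
  show ?thesis
  proof (cases "i = 0")
    case True
    then show ?thesis using ij K0 iK by (auto simp: rr_def field_simps)
  next
    case False
    then have "1 \<le> real i" by simp
    have h: "real K * (real i + 1) \<le> real K * real K" using iK by (intro mult_left_mono) auto
    then show ?thesis using ij K0 iK False \<open>1 \<le> real i\<close> by (auto simp: rr_def field_simps)
  qed
qed

lemma th_strict:
  assumes K: "2 \<le> K" and ij: "i < j" "j \<le> K"
  shows "th K i < th K j"
  using rr_strict[OF assms] pi_gt_zero by (simp add: th_def)

lemma zgrid_strict:
  assumes K: "2 \<le> K" and ij: "i < j" "j \<le> K"
  shows "zgrid K i < zgrid K j"
proof -
  have "sin (th K i) < sin (th K j)"
    using th_strict[OF assms] th_bounds[OF K, of i] th_bounds[OF K, of j]
    by (intro sin_monotone_2pi) auto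
  moreover have "0 < sin (th K i)" using th_bounds[OF K, of i] by (intro sin_gt_zero2) auto
  ultimately show ?thesis unfolding zgrid_th by (intro power_strict_mono) auto
qed

lemma zgrid_mono:
  assumes K: "2 \<le> K" and ij: "i \<le> j" "j \<le> K"
  shows "zgrid K i \<le> zgrid K j"
  using zgrid_strict[OF K, of i j] ij by (cases "i = j") auto

lemma zgrid_01:
  assumes K: "2 \<le> K"
  shows "0 < zgrid K i" "zgrid K i < 1"
proof -
  have s: "0 < sin (th K i)" using th_bounds[OF K, of i] by (intro sin_gt_zero2) auto
  have c: "0 < cos (th K i)" using th_bounds[OF K, of i] by (intro cos_gt_zero) auto
  show "0 < zgrid K i" using s by (simp add: zgrid_th)
  show "zgrid K i < 1" using c by (simp add: zgrid_th sin_squared_eq)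
qed

lemma rr_step:
  assumes K: "2 \<le> K" and i: "i < K"
  shows "rr K (Suc i) - rr K i \<le> 1 / (2 * real K)"
    "rr K (Suc i) \<le> 2 * rr K i"
    "1/2 - rr K i \<le> 2 * (1/2 - rr K (Suc i))"
proof -
  have K0: "(2::real) \<le> real K" using K by simp
  consider "i = 0" | "0 < i" "Suc i < K" | "0 < i" "Suc i = K" using i by linarith
  then have "rr K (Suc i) - rr K i \<le> 1 / (2 * real K) \<and> rr K (Suc i) \<le> 2 * rr K i \<and>
      1/2 - rr K i \<le> 2 * (1/2 - rr K (Suc i))"
  proof cases
    case 1
    then have "Suc 0 < K" using K by simp
    then show ?thesis using 1 K0 by (simp add: rr_def field_simps)
  next
    case 2
    have r: "real i + 2 \<le> real K" "1 \<le> real i" using 2 by auto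
    have h: "real K * (real i + 2) \<le> real K * real K" using r by (intro mult_left_mono) auto
    show ?thesis using 2 K0 r h by (simp add: rr_def field_simps)
  next
    case 3
    have r: "real i + 1 = real K" "1 \<le> real i" using 3 by auto
    have e1: "rr K i = 1/2 - 1 / (2 * real K)"
      using 3 K0 r by (simp add: rr_def field_simps)
    have e2: "rr K (Suc i) = 1/2 - 1 / (4 * real K)"
      using 3 by (simp add: rr_def)
    show ?thesis unfolding e1 e2 using K0 by (simp add: field_simps)
  qed
  then show "rr K (Suc i) - rr K i \<le> 1 / (2 * real K)"
    "rr K (Suc i) \<le> 2 * rr K i"
    "1/2 - rr K i \<le> 2 * (1/2 - rr K (Suc i))" by auto
qed


lemma sin_sq_diff: fixes x y :: real shows "(sin x)^2 - (sin y)^2 = sin (x - y) * (sin x * cos y + cos x * sin y)"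
proof -
  have "sin (x - y) * (sin x * cos y + cos x * sin y) = (sin x)^2 * (cos y)^2 - (cos x)^2 * (sin y)^2"
    by (simp only: sin_diff) (simp add: power2_eq_square algebra_simps)
  also have "\<dots> = (sin x)^2 - (sin y)^2"
    by (simp add: cos_squared_eq algebra_simps)
  finally show ?thesis by simp
qed

lemma grid_err:
  assumes K: "2 \<le> K" and i: "i < K"
  shows "(zgrid K (Suc i) - zgrid K i)^2 / (zgrid K i * (1 - zgrid K i)) \<le> 100 / (real K)^2"
proof -
  define \<alpha> where "\<alpha> = th K i"
  define \<beta> where "\<beta> = th K (Suc i)"
  have a0: "0 < \<alpha>" "\<alpha> < pi/2" using th_bounds[OF K] by (auto simp: \<alpha>_def)
  have b0: "0 < \<beta>" "\<beta> < pi/2" using th_bounds[OF K] by (auto simp: \<beta>_def)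
  have ab: "\<alpha> < \<beta>" using th_strict[OF K, of i "Suc i"] i by (simp add: \<alpha>_def \<beta>_def)
  have st: "rr K (Suc i) - rr K i \<le> 1 / (2 * real K)" "rr K (Suc i) \<le> 2 * rr K i"
    "1/2 - rr K i \<le> 2 * (1/2 - rr K (Suc i))" using rr_step[OF K i] by auto
  have gap: "\<beta> - \<alpha> \<le> pi / (2 * real K)"
    using mult_left_mono[OF st(1), of pi] pi_gt_zero
    by (simp add: \<alpha>_def \<beta>_def th_def right_diff_distrib)
  have dbl: "\<beta> \<le> 2 * \<alpha>" using mult_left_mono[OF st(2), of pi] pi_gt_zero
    by (simp add: \<alpha>_def \<beta>_def th_def)
  have dbl2: "pi/2 - \<alpha> \<le> 2 * (pi/2 - \<beta>)" using mult_left_mono[OF st(3), of pi] pi_gt_zero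
    by (simp add: \<alpha>_def \<beta>_def th_def right_diff_distrib)
  have sa: "0 < sin \<alpha>" using a0 by (intro sin_gt_zero2) auto
  have cb: "0 < cos \<beta>" using b0 by (intro cos_gt_zero) auto
  have ca: "cos \<beta> \<le> cos \<alpha>" using a0 b0 ab by (intro cos_monotone_0_pi_le) auto
  have sb0: "0 \<le> sin \<beta>" using b0 by (intro sin_ge_zero) auto
  have sbd: "sin \<beta> \<le> 2 * sin \<alpha>"
  proof -
    have "sin \<beta> = 2 * sin (\<beta>/2) * cos (\<beta>/2)" using sin_double[of "\<beta>/2"] by simp
    also have "\<dots> \<le> 2 * sin (\<beta>/2) * 1"
      using b0 by (intro mult_left_mono) (auto intro: sin_ge_zero)
    also have "\<dots> \<le> 2 * sin \<alpha>" using b0 dbl a0 by (simp add: sin_monotone_2pi_le)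
    finally show ?thesis .
  qed
  have cad: "cos \<alpha> \<le> 2 * cos \<beta>"
  proof -
    define x where "x = pi/2 - \<alpha>"
    have x: "0 < x" "x < pi/2" "x/2 \<le> pi/2 - \<beta>" using a0 dbl2 by (auto simp: x_def)
    have "cos \<alpha> = sin x" by (simp add: x_def cos_sin_eq)
    also have "\<dots> = 2 * sin (x/2) * cos (x/2)" using sin_double[of "x/2"] by simp
    also have "\<dots> \<le> 2 * sin (x/2) * 1"
      using x by (intro mult_left_mono) (auto intro: sin_ge_zero)
    also have "\<dots> \<le> 2 * sin (pi/2 - \<beta>)" using x b0 by (simp add: sin_monotone_2pi_le)
    also have "\<dots> = 2 * cos \<beta>" by (simp add: cos_sin_eq)
    finally show ?thesis .
  qed
  have ca0: "0 < cos \<alpha>" using a0 by (intro cos_gt_zero) auto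
  have prod: "sin \<beta> * cos \<alpha> \<le> (2 * sin \<alpha>) * (2 * cos \<beta>)"
    using sbd cad sb0 cb ca0 by (intro mult_mono) auto
  have S0: "0 \<le> sin \<beta> * cos \<alpha> + cos \<beta> * sin \<alpha>" using sb0 ca0 cb sa by simp
  have S: "sin \<beta> * cos \<alpha> + cos \<beta> * sin \<alpha> \<le> 5 * (sin \<alpha> * cos \<beta>)"
    using prod mult.commute[of "cos \<beta>" "sin \<alpha>"] by linarith
  have sd: "0 \<le> sin (\<beta> - \<alpha>)" "sin (\<beta> - \<alpha>) \<le> \<beta> - \<alpha>" using ab b0 a0
    by (auto intro: sin_ge_zero sin_x_le_x)
  define D where "D = zgrid K (Suc i) - zgrid K i"
  have D: "D = sin (\<beta> - \<alpha>) * (sin \<beta> * cos \<alpha> + cos \<beta> * sin \<alpha>)"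
    unfolding D_def zgrid_th \<alpha>_def[symmetric] \<beta>_def[symmetric] by (rule sin_sq_diff)
  have D0: "0 \<le> D" unfolding D using sd S0 by simp
  have Dle: "D \<le> (\<beta> - \<alpha>) * (5 * (sin \<alpha> * cos \<beta>))"
    unfolding D using sd S S0 by (intro mult_mono) auto
  have "D^2 \<le> ((\<beta> - \<alpha>) * (5 * (sin \<alpha> * cos \<beta>)))^2"
    using D0 Dle by (intro power_mono) auto
  also have "\<dots> = 25 * (\<beta> - \<alpha>)^2 * ((sin \<alpha>)^2 * (cos \<beta>)^2)"
    by (simp add: power_mult_distrib)
  also have "\<dots> \<le> 25 * (\<beta> - \<alpha>)^2 * ((sin \<alpha>)^2 * (cos \<alpha>)^2)"
    using ca cb by (intro mult_left_mono power_mono) auto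
  finally have D2: "D^2 \<le> 25 * (\<beta> - \<alpha>)^2 * ((sin \<alpha>)^2 * (cos \<alpha>)^2)" .
  have den: "zgrid K i * (1 - zgrid K i) = (sin \<alpha>)^2 * (cos \<alpha>)^2"
    by (simp add: zgrid_th \<alpha>_def[symmetric] cos_squared_eq)
  have denpos: "0 < (sin \<alpha>)^2 * (cos \<alpha>)^2" using sa ca0 by simp
  have "D^2 / (zgrid K i * (1 - zgrid K i)) \<le> 25 * (\<beta> - \<alpha>)^2"
    unfolding den using D2 denpos by (simp add: divide_le_eq)
  also have "\<dots> \<le> 25 * (pi / (2 * real K))^2"
    using gap ab by (intro mult_left_mono power_mono) auto
  also have "\<dots> \<le> 100 / (real K)^2"
  proof -
    have "pi^2 \<le> 4^2" using pi_less_4 pi_gt_zero by (intro power_mono) auto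
    then show ?thesis using K by (simp add: power_divide field_simps)
  qed
  finally show ?thesis by (simp add: D_def)
qed

lemma zgrid0_small:
  assumes K: "2 \<le> K"
  shows "zgrid K 0 \<le> 1 / (real K)^2" "1 - zgrid K K \<le> 1 / (real K)^2"
proof -
  have K0: "(2::real) \<le> real K" using K by simp
  have x0: "0 \<le> pi / (4 * real K)" using K0 by simp
  have s: "0 \<le> sin (pi / (4 * real K))" "sin (pi / (4 * real K)) \<le> pi / (4 * real K)"
    using K0 x0 pi_gt_zero by (auto intro!: sin_ge_zero sin_x_le_x simp: divide_le_eq)
  have "(sin (pi / (4 * real K)))^2 \<le> (pi / (4 * real K))^2" using s by (intro power_mono) auto
  also have "\<dots> \<le> 1 / (real K)^2"
  proof -
    have "pi^2 \<le> 4^2" using pi_less_4 pi_gt_zero by (intro power_mono) auto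
    then show ?thesis using K0 by (simp add: power_divide field_simps)
  qed
  finally have *: "(sin (pi / (4 * real K)))^2 \<le> 1 / (real K)^2" .
  then show "zgrid K 0 \<le> 1 / (real K)^2" by (simp add: zgrid_def)
  show "1 - zgrid K K \<le> 1 / (real K)^2" using * K by (simp add: zgrid_def sin_squared_eq)
qed


lemma iden_aux:
  fixes a b p q X Y :: real
  assumes nz: "a \<noteq> 0" "b \<noteq> 0" "p \<noteq> 0" "q \<noteq> 0" and e: "p - q = b - a"
  shows "X / (b * q) * Y / a - Y / (a * p) * X / b = X / (b * q) * (Y * (b - a) / (a * p))"
    and "Y / (a * p) * X / q - X / (b * q) * Y / p = X / (b * q) * (Y * (b - a) / (a * p))"
proof -
  have r: "X / (b * q) * (Y * (b - a) / (a * p)) = X * Y * (p - q) / (a * b * p * q)"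
    unfolding e using nz by (simp add: field_simps)
  have "X / (b * q) * Y / a - Y / (a * p) * X / b = X * Y * (p - q) / (a * b * p * q)"
    using nz by (simp add: field_simps)
  then show "X / (b * q) * Y / a - Y / (a * p) * X / b = X / (b * q) * (Y * (b - a) / (a * p))"
    using r by simp
  have "Y / (a * p) * X / q - X / (b * q) * Y / p = X * Y * (b - a) / (a * b * p * q)"
    using nz by (simp add: field_simps)
  then show "Y / (a * p) * X / q - X / (b * q) * Y / p = X / (b * q) * (Y * (b - a) / (a * p))"
    using r e by simp
qed

lemma round2:
  fixes a b w y :: real
  assumes ab: "0 < a" "a < b" "b < 1" and w: "a \<le> w" "w < b" and y: "y \<in> {0, 1}"
  defines "A \<equiv> (b - w) / (b * (1 - b))" and "B \<equiv> (w - a) / (a * (1 - a))"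
  shows "A / (A + B) * logloss a y + B / (A + B) * logloss b y \<le> logloss w y + (b - a)^2 / (a * (1 - a))"
proof -
  define X where "X = b - w"
  define Y where "Y = w - a"
  have X0: "0 < X" and Y0: "0 \<le> Y" using w by (auto simp: X_def Y_def)
  have A0: "0 < A" using ab w by (simp add: A_def)
  have B0: "0 \<le> B" using ab w by (simp add: B_def)
  define S where "S = A + B"
  have S0: "0 < S" using A0 B0 by (simp add: S_def)
  define c where "c = Y * (b - a) / (a * (1 - a))"
  have c0: "0 \<le> c" using Y0 ab by (simp add: c_def)
  have cle: "c \<le> (b - a)^2 / (a * (1 - a))"
  proof -
    have "Y * (b - a) \<le> (b - a) * (b - a)" using w ab by (intro mult_right_mono) (auto simp: Y_def)
    then show ?thesis using ab unfolding c_def power2_eq_square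
      by (intro divide_right_mono) auto
  qed
  have AS: "A / S \<le> 1" using A0 B0 by (simp add: S_def)
  have fin: "A * c / S \<le> (b - a)^2 / (a * (1 - a))"
  proof -
    have "A * c / S = (A / S) * c" by simp
    also have "\<dots> \<le> 1 * c" using AS c0 by (intro mult_right_mono) auto
    finally show ?thesis using cle by simp
  qed
  have wpos: "0 < w" "w < 1" using ab w by auto
  have iden: "A * Y / a - B * X / b = A * c" and iden2: "B * X / (1 - b) - A * Y / (1 - a) = A * c"
  proof -
    have nz: "a \<noteq> 0" "b \<noteq> 0" "1 - a \<noteq> 0" "1 - b \<noteq> 0" using ab by auto
    have eA: "A = X / (b * (1 - b))" and eB: "B = Y / (a * (1 - a))"
      by (simp_all add: A_def B_def X_def Y_def)
    show "A * Y / a - B * X / b = A * c" "B * X / (1 - b) - A * Y / (1 - a) = A * c"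
      unfolding eA eB c_def using iden_aux[OF nz] by simp_all
  qed
  consider "y = 1" | "y = 0" using y by auto
  then show ?thesis
  proof cases
    case 1
    have l1: "ln (w / a) \<le> Y / a" using ln_le_minus_one[of "w / a"] ab wpos
      by (simp add: Y_def diff_divide_distrib)
    have l2: "ln (w / b) \<le> - X / b" using ln_le_minus_one[of "w / b"] ab wpos
      by (simp add: X_def diff_divide_distrib)
    have "A / S * logloss a y + B / S * logloss b y - logloss w y
        = (A * ln (w / a) + B * ln (w / b)) / S"
    proof -
      have "A * ln (w / a) + B * ln (w / b) = S * ln w - A * ln a - B * ln b"
        using ab wpos by (simp add: ln_div S_def algebra_simps)
      moreover have "A / S * logloss a y + B / S * logloss b y - logloss w y = (S * ln w - A * ln a - B * ln b) / S"
        using 1 S0 by (simp add: logloss_def field_simps)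
      ultimately show ?thesis by simp
    qed
    also have "\<dots> \<le> (A * (Y / a) + B * (- X / b)) / S"
      using S0 A0 B0 l1 l2 by (intro divide_right_mono add_mono mult_left_mono) auto
    also have "\<dots> = A * c / S" using iden by simp
    finally show ?thesis using fin by (simp add: S_def)
  next
    case 2
    have e1: "(1 - w) / (1 - a) - 1 = - Y / (1 - a)" using ab by (simp add: Y_def field_simps)
    have e2: "(1 - w) / (1 - b) - 1 = X / (1 - b)" using ab by (simp add: X_def field_simps)
    have l1: "ln ((1 - w) / (1 - a)) \<le> - Y / (1 - a)"
      using ln_le_minus_one[of "(1 - w) / (1 - a)"] ab wpos e1 by simp
    have l2: "ln ((1 - w) / (1 - b)) \<le> X / (1 - b)"
      using ln_le_minus_one[of "(1 - w) / (1 - b)"] ab wpos e2 by simp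
    have "A / S * logloss a y + B / S * logloss b y - logloss w y
        = (A * ln ((1 - w) / (1 - a)) + B * ln ((1 - w) / (1 - b))) / S"
    proof -
      have "A * ln ((1 - w) / (1 - a)) + B * ln ((1 - w) / (1 - b)) = S * ln (1 - w) - A * ln (1 - a) - B * ln (1 - b)"
        using ab wpos by (simp add: ln_div S_def algebra_simps)
      moreover have "A / S * logloss a y + B / S * logloss b y - logloss w y = (S * ln (1 - w) - A * ln (1 - a) - B * ln (1 - b)) / S"
        using 2 S0 by (simp add: logloss_def field_simps)
      ultimately show ?thesis by simp
    qed
    also have "\<dots> \<le> (A * (- Y / (1 - a)) + B * (X / (1 - b))) / S"
      using S0 A0 B0 l1 l2 by (intro divide_right_mono add_mono mult_left_mono) auto
    also have "\<dots> = A * c / S" using iden2 by simp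
    finally show ?thesis using fin by (simp add: S_def)
  qed
qed

lemma sum_two_points:
  fixes f :: "nat \<Rightarrow> real"
  assumes "i < K"
  shows "(\<Sum>j\<le>K. (if j = i then qa else if j = Suc i then qb else 0) * f j) = qa * f i + qb * f (Suc i)"
proof -
  have "(\<Sum>j\<le>K. (if j = i then qa else if j = Suc i then qb else 0) * f j)
      = (\<Sum>j\<le>K. (if j = i then qa * f i else 0) + (if j = Suc i then qb * f (Suc i) else 0))"
    by (rule sum.cong) auto
  also have "\<dots> = qa * f i + qb * f (Suc i)"
    using assms by (simp add: sum.distrib)
  finally show ?thesis .
qed

lemma frac_small:
  fixes z :: real
  assumes "0 < z" "z \<le> 1/4"
  shows "z / (1 - z) \<le> 2 * z"
proof -
  have "0 \<le> z * (1 - 2 * z)" using assms by (intro mult_nonneg_nonneg) auto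
  then have "z \<le> 2 * z * (1 - z)" by (simp add: algebra_simps)
  then show ?thesis using assms by (simp add: divide_le_eq)
qed

lemma rround_err:
  assumes K: "2 \<le> K" and w: "0 < w" "w < 1" and y: "y \<in> {0, 1}"
  shows "(\<Sum>j\<le>K. rround K w j * logloss (zgrid K j) y) \<le> logloss w y + 100 / (real K)^2"
proof -
  have K0: "(2::real) \<le> real K" using K by simp
  have E0: "0 \<le> 100 / (real K)^2" by simp
  have sm: "1 / (real K)^2 \<le> 1/4"
  proof -
    have "2^2 \<le> (real K)^2" using K0 by (intro power_mono) auto
    then show ?thesis by (simp add: divide_simps)
  qed
  have Ebig: "2 / (real K)^2 \<le> 100 / (real K)^2" by (simp add: divide_right_mono)
  consider "w < zgrid K 0" | "zgrid K K \<le> w" | "zgrid K 0 \<le> w" "w < zgrid K K" by linarith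
  then show ?thesis
  proof cases
    case 1
    have "(\<Sum>j\<le>K. rround K w j * logloss (zgrid K j) y) = (\<Sum>j\<le>K. if j = 0 then logloss (zgrid K 0) y else 0)"
      by (rule sum.cong) (auto simp: rround_def 1)
    also have "\<dots> = logloss (zgrid K 0) y" by simp
    also have "\<dots> \<le> logloss w y + 100 / (real K)^2"
    proof -
      have z: "0 < zgrid K 0" "zgrid K 0 < 1" using zgrid_01[OF K] by auto
      have zs: "zgrid K 0 \<le> 1/(real K)^2" using zgrid0_small[OF K] by auto
      consider "y = 1" | "y = 0" using y by auto
      then show ?thesis
      proof cases
        case 1
        have "ln w \<le> ln (zgrid K 0)" using \<open>w < zgrid K 0\<close> w by simp
        then have "logloss (zgrid K 0) y \<le> logloss w y" using 1 by (simp add: logloss_def)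
        then show ?thesis using E0 by linarith
      next
        case 2
        define z where "z = zgrid K 0"
        have "- ln (1 - z) = ln (1 / (1 - z))" using z by (simp add: z_def ln_div)
        also have "\<dots> \<le> 1 / (1 - z) - 1" using z by (intro ln_le_minus_one) (auto simp: z_def)
        also have "\<dots> = z / (1 - z)" using z by (simp add: z_def field_simps)
        also have "\<dots> \<le> 2 * z" using z zs sm by (intro frac_small) (auto simp: z_def)
        also have "\<dots> \<le> 2 / (real K)^2" using zs by (simp add: z_def)
        finally have a: "- ln (1 - z) \<le> 2 / (real K)^2" .
        have b: "ln (1 - w) \<le> 0" using w by simp
        show ?thesis using 2 a b Ebig by (simp add: logloss_def z_def)
      qed
    qed
    finally show ?thesis .
  next
    case 2
    have nz: "\<not> w < zgrid K 0" using 2 zgrid_mono[OF K, of 0 K] by auto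
    have "(\<Sum>j\<le>K. rround K w j * logloss (zgrid K j) y) = (\<Sum>j\<le>K. if j = K then logloss (zgrid K K) y else 0)"
      by (rule sum.cong) (auto simp: rround_def 2 nz)
    also have "\<dots> = logloss (zgrid K K) y" by simp
    also have "\<dots> \<le> logloss w y + 100 / (real K)^2"
    proof -
      have z: "0 < zgrid K K" "zgrid K K < 1" using zgrid_01[OF K] by auto
      have zs: "1 - zgrid K K \<le> 1/(real K)^2" using zgrid0_small[OF K] by auto
      consider "y = 0" | "y = 1" using y by auto
      then show ?thesis
      proof cases
        case 1
        have "ln (1 - w) \<le> ln (1 - zgrid K K)" using 2 w z by simp
        then have "logloss (zgrid K K) y \<le> logloss w y" using 1 by (simp add: logloss_def)
        then show ?thesis using E0 by linarith
      next
        case 2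
        define z where "z = zgrid K K"
        have "- ln z = ln (1 / z)" using z by (simp add: z_def ln_div)
        also have "\<dots> \<le> 1 / z - 1" using z by (intro ln_le_minus_one) (auto simp: z_def)
        also have "\<dots> = (1 - z) / z" using z by (simp add: z_def field_simps)
        also have "\<dots> \<le> 2 * (1 - z)" using z zs sm frac_small[of "1 - z"] by (auto simp: z_def)
        also have "\<dots> \<le> 2 / (real K)^2" using zs by (simp add: z_def)
        finally have a: "- ln z \<le> 2 / (real K)^2" .
        have b: "ln w \<le> 0" using w by simp
        show ?thesis using 2 a b Ebig by (simp add: logloss_def z_def)
      qed
    qed
    finally show ?thesis .
  next
    case 3
    define S where "S = {i. i < K \<and> zgrid K i \<le> w}"
    have finS: "finite S" by (simp add: S_def)
    have S0: "0 \<in> S" using 3 K by (simp add: S_def)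
    define i where "i = Max S"
    have iS: "i \<in> S" unfolding i_def using finS S0 by (intro Max_in) auto
    have iK: "i < K" and zi: "zgrid K i \<le> w" using iS by (auto simp: S_def)
    have zi1: "w < zgrid K (Suc i)"
    proof (cases "Suc i < K")
      case True
      show ?thesis
      proof (rule ccontr)
        assume "\<not> w < zgrid K (Suc i)"
        then have "Suc i \<in> S" using True by (simp add: S_def)
        then have "Suc i \<le> i" using finS by (simp add: i_def)
        then show False by simp
      qed
    next
      case False
      then have "Suc i = K" using iK by simp
      then show ?thesis using 3 by simp
    qed
    have the_i: "(THE i. i < K \<and> zgrid K i \<le> w \<and> w < zgrid K (Suc i)) = i"
    proof (rule the_equality)
      show "i < K \<and> zgrid K i \<le> w \<and> w < zgrid K (Suc i)" using iK zi zi1 by simp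
      fix j assume j: "j < K \<and> zgrid K j \<le> w \<and> w < zgrid K (Suc j)"
      show "j = i"
      proof (rule ccontr)
        assume "j \<noteq> i"
        then consider "j < i" | "i < j" by linarith
        then show False
        proof cases
          case 1
          then have "zgrid K (Suc j) \<le> zgrid K i" using iK by (intro zgrid_mono[OF K]) auto
          then show False using j zi by simp
        next
          case 2
          then have "zgrid K (Suc i) \<le> zgrid K j" using j by (intro zgrid_mono[OF K]) auto
          then show False using j zi1 by simp
        qed
      qed
    qed
    define a where "a = zgrid K i"
    define b where "b = zgrid K (Suc i)"
    define A where "A = (b - w) / (b * (1 - b))"
    define B where "B = (w - a) / (a * (1 - a))"
    have nz: "\<not> w < zgrid K 0" "\<not> zgrid K K \<le> w" using 3 by auto
    have rr: "\<And>j. rround K w j = (if j = i then A / (A + B) else if j = Suc i then B / (A + B) else 0)"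
      unfolding rround_def using nz by (simp add: the_i Let_def A_def B_def a_def b_def)
    have "(\<Sum>j\<le>K. rround K w j * logloss (zgrid K j) y) = A / (A + B) * logloss a y + B / (A + B) * logloss b y"
      unfolding rr using sum_two_points[OF iK] by (simp add: a_def b_def)
    also have "\<dots> \<le> logloss w y + (b - a)^2 / (a * (1 - a))"
      unfolding A_def B_def
    proof (rule round2)
      show "0 < a" "b < 1" using zgrid_01[OF K] by (auto simp: a_def b_def)
      show "a < b" using zgrid_strict[OF K, of i "Suc i"] iK by (simp add: a_def b_def)
    qed (use zi zi1 y in \<open>auto simp: a_def b_def\<close>)
    also have "\<dots> \<le> logloss w y + 100 / (real K)^2"
      using grid_err[OF K iK] by (simp add: a_def b_def)
    finally show ?thesis .
  qed
qed


lemma regret_step: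
  assumes a: "0 \<le> a" and b: "0 \<le> b" and p: "0 \<le> p" "p \<le> 1" and yy: "yy \<in> {0, 1}"
  shows "p * logloss (gmean a b) yy \<le>
    ln (integral {0<..<1} (gfun a b)) - ln (integral {0<..<1} (gfun (a + p * yy) (b + p * (1 - yy))))"
proof -
  define M where "M = integral {0<..<1} (gfun a b)"
  define m where "m = gmean a b"
  have M0: "0 < M" using gfun_integral_pos[OF a b] by (simp add: M_def)
  have gb: "0 < m" "m < 1" "integral {0<..<1} (\<lambda>w. w * gfun a b w) = m * M"
    "integral {0<..<1} (\<lambda>w. (1 - w) * gfun a b w) = (1 - m) * M"
    using gmean_bounds[OF a b] by (simp_all add: m_def M_def)
  have G: "gfun a b integrable_on {0<..<1}" by (rule gfun_integrable[OF a b])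
  have posG: "\<And>w. w \<in> {0<..<1} \<Longrightarrow> 0 \<le> gfun a b w" using gfun_pos less_imp_le by blast
  consider "yy = 1" | "yy = 0" using yy by auto
  then show ?thesis
  proof cases
    case 1
    have e: "integral {0<..<1} (gfun (a + p * yy) (b + p * (1 - yy))) = integral {0<..<1} (\<lambda>w. gfun a b w * w powr p)"
      using 1 by (intro integral_cong) (simp add: gfun_powr_w)
    have uG: "(\<lambda>w. w * gfun a b w) integrable_on {0<..<1}"
      by (rule integrable_eq[OF gfun_integrable[of "a+1" b]]) (use a b gfun_mult_w in auto)
    have Gp: "(\<lambda>w. gfun a b w * w powr p) integrable_on {0<..<1}"
      by (rule integrable_eq[OF gfun_integrable[of "a+p" b]]) (use a b p gfun_powr_w in auto)
    have J: "integral {0<..<1} (\<lambda>w. gfun a b w * w powr p) \<le> m powr p * M"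
      unfolding M_def
      by (rule jensen_gen[OF G uG Gp _ gb(1) p]) (use posG gb(3) M_def in auto)
    have P: "0 < integral {0<..<1} (\<lambda>w. gfun a b w * w powr p)"
      using gfun_integral_pos[of "a + p" b] a b p e 1 by simp
    have "ln (integral {0<..<1} (\<lambda>w. gfun a b w * w powr p)) \<le> ln (m powr p * M)"
      using J P by simp
    also have "\<dots> = p * ln m + ln M" using gb M0 by (simp add: ln_mult ln_powr)
    finally show ?thesis using 1 e by (simp add: logloss_def m_def M_def)
  next
    case 2
    have e: "integral {0<..<1} (gfun (a + p * yy) (b + p * (1 - yy))) = integral {0<..<1} (\<lambda>w. gfun a b w * (1 - w) powr p)"
      using 2 by (intro integral_cong) (simp add: gfun_powr_1w)
    have uG: "(\<lambda>w. (1 - w) * gfun a b w) integrable_on {0<..<1}"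
      by (rule integrable_eq[OF gfun_integrable[of a "b+1"]]) (use a b gfun_mult_1w in auto)
    have Gp: "(\<lambda>w. gfun a b w * (1 - w) powr p) integrable_on {0<..<1}"
      by (rule integrable_eq[OF gfun_integrable[of a "b+p"]]) (use a b p gfun_powr_1w in auto)
    have m1: "0 < 1 - m" using gb by simp
    have J: "integral {0<..<1} (\<lambda>w. gfun a b w * (1 - w) powr p) \<le> (1 - m) powr p * M"
      unfolding M_def
      by (rule jensen_gen[OF G uG Gp _ m1 p]) (use posG gb(4) M_def in auto)
    have P: "0 < integral {0<..<1} (\<lambda>w. gfun a b w * (1 - w) powr p)"
      using gfun_integral_pos[of a "b + p"] a b p e 2 by simp
    have "ln (integral {0<..<1} (\<lambda>w. gfun a b w * (1 - w) powr p)) \<le> ln ((1 - m) powr p * M)"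
      using J P by simp
    also have "\<dots> = p * ln (1 - m) + ln M" using m1 M0 by (simp add: ln_mult ln_powr)
    finally show ?thesis using 2 e by (simp add: logloss_def m_def M_def)
  qed
qed


definition Aa :: "(nat \<Rightarrow> real) \<Rightarrow> (nat \<Rightarrow> nat \<Rightarrow> real) \<Rightarrow> nat \<Rightarrow> nat \<Rightarrow> real" where
  "Aa y \<pi> i t = (\<Sum>\<tau>\<in>{1..<t}. \<pi> \<tau> i * y \<tau>)"

definition Bb :: "(nat \<Rightarrow> real) \<Rightarrow> (nat \<Rightarrow> nat \<Rightarrow> real) \<Rightarrow> nat \<Rightarrow> nat \<Rightarrow> real" where
  "Bb y \<pi> i t = (\<Sum>\<tau>\<in>{1..<t}. \<pi> \<tau> i * (1 - y \<tau>))"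

lemma mu_gfun: "mu_bm y \<pi> t i w = gfun (Aa y \<pi> i t) (Bb y \<pi> i t) w"
proof -
  have "- (\<Sum>\<tau>\<in>{1..<t}. \<pi> \<tau> i * logloss w (y \<tau>))
      = (\<Sum>\<tau>\<in>{1..<t}. \<pi> \<tau> i * y \<tau> * ln w + \<pi> \<tau> i * (1 - y \<tau>) * ln (1 - w))"
    by (simp add: logloss_def sum_negf[symmetric] algebra_simps)
  also have "\<dots> = Aa y \<pi> i t * ln w + Bb y \<pi> i t * ln (1 - w)"
    by (simp add: Aa_def Bb_def sum.distrib sum_distrib_right)
  finally show ?thesis by (simp add: mu_bm_def gfun_def)
qed

lemma wmean_gmean: "wmean_bm y \<pi> t i = gmean (Aa y \<pi> i t) (Bb y \<pi> i t)"
  unfolding wmean_bm_def gmean_def integral_closed_open mu_gfun ..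

lemma integral_one: "integral {0<..<1} (\<lambda>w::real. 1) = (1::real)"
  using integral_closed_open[of "\<lambda>w. 1"] by simp

lemma kl_identity:
  fixes p yv :: "nat \<Rightarrow> real" and z :: real and S :: "nat set"
  assumes fin: "finite S" and p: "\<And>t. t \<in> S \<Longrightarrow> 0 \<le> p t" and yv: "\<And>t. t \<in> S \<Longrightarrow> yv t \<in> {0, 1}"
    and z: "0 < z" "z < 1"
  defines "a \<equiv> (\<Sum>t\<in>S. p t * yv t)" and "b \<equiv> (\<Sum>t\<in>S. p t * (1 - yv t))"
  shows "(\<Sum>t\<in>S. p t * bernKL ((\<Sum>t\<in>S. yv t * p t) / (\<Sum>t\<in>S. p t)) z)
       = (\<Sum>t\<in>S. p t * logloss z (yv t)) + (a * ln (a / (a + b)) + b * ln (1 - a / (a + b)))"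
proof -
  have a0: "0 \<le> a" unfolding a_def using p yv by (intro sum_nonneg) force
  have b0: "0 \<le> b" unfolding b_def using p yv by (intro sum_nonneg) force
  have sp: "(\<Sum>t\<in>S. p t) = a + b" by (simp add: a_def b_def sum.distrib[symmetric] algebra_simps)
  have sy: "(\<Sum>t\<in>S. yv t * p t) = a" by (simp add: a_def mult.commute)
  have sl: "(\<Sum>t\<in>S. p t * logloss z (yv t)) = - a * ln z - b * ln (1 - z)"
  proof -
    have "(\<Sum>t\<in>S. p t * logloss z (yv t)) = (\<Sum>t\<in>S. (- ln z) * (p t * yv t) - ln (1 - z) * (p t * (1 - yv t)))"
      by (rule sum.cong) (simp_all add: logloss_def algebra_simps)
    also have "\<dots> = (- ln z) * a - ln (1 - z) * b"
      by (simp only: sum_subtractf sum_distrib_left[symmetric] a_def b_def)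
    finally show ?thesis by simp
  qed
  define \<rho> where "\<rho> = a / (a + b)"
  have lhs: "(\<Sum>t\<in>S. p t * bernKL ((\<Sum>t\<in>S. yv t * p t) / (\<Sum>t\<in>S. p t)) z) = (a + b) * bernKL \<rho> z"
    by (simp add: sum_distrib_right[symmetric] sp sy \<rho>_def)
  show ?thesis
  proof (cases "a + b = 0")
    case True
    then have "a = 0" "b = 0" using a0 b0 by auto
    then show ?thesis unfolding lhs sl by simp
  next
    case False
    then have n0: "0 < a + b" using a0 b0 by simp
    have ea: "(a + b) * \<rho> = a" and eb: "(a + b) * (1 - \<rho>) = b" using False by (simp_all add: \<rho>_def field_simps)
    have t1: "a * ln (\<rho> / z) = a * ln \<rho> - a * ln z"
    proof (cases "a = 0")
      case False
      then have "0 < \<rho>" using a0 n0 by (simp add: \<rho>_def)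
      then show ?thesis using z by (simp add: ln_div algebra_simps)
    qed simp
    have t2: "b * ln ((1 - \<rho>) / (1 - z)) = b * ln (1 - \<rho>) - b * ln (1 - z)"
    proof (cases "b = 0")
      case False
      then have "0 < 1 - \<rho>" using b0 n0 by (simp add: \<rho>_def field_simps)
      then show ?thesis using z by (simp add: ln_div algebra_simps)
    qed simp
    have "(a + b) * bernKL \<rho> z = ((a + b) * \<rho>) * ln (\<rho> / z) + ((a + b) * (1 - \<rho>)) * ln ((1 - \<rho>) / (1 - z))"
      by (simp add: bernKL_def algebra_simps)
    also have "\<dots> = a * ln (\<rho> / z) + b * ln ((1 - \<rho>) / (1 - z))" unfolding ea eb ..
    also have "\<dots> = (- a * ln z - b * ln (1 - z)) + (a * ln \<rho> + b * ln (1 - \<rho>))"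
      unfolding t1 t2 by simp
    finally show ?thesis unfolding lhs sl \<rho>_def .
  qed
qed


lemma run_props:
  assumes run: "bm_log_run K T y \<pi>" and t: "t \<in> {1..T}" and i: "i \<le> K"
  shows "0 \<le> \<pi> t i" "\<pi> t i \<le> 1"
proof -
  have nn: "\<forall>j\<le>K. 0 \<le> \<pi> t j" and s1: "(\<Sum>j\<le>K. \<pi> t j) = 1"
    using run t unfolding bm_log_run_def by auto
  show "0 \<le> \<pi> t i" using nn i by auto
  have "\<pi> t i \<le> (\<Sum>j\<le>K. \<pi> t j)"
    by (rule member_le_sum) (use nn i in auto)
  then show "\<pi> t i \<le> 1" using s1 by simp
qed

lemma AB_nonneg:
  assumes run: "bm_log_run K T y \<pi>" and ys: "\<forall>t\<in>{1..T}. y t \<in> {0, 1}" and i: "i \<le> K"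
    and t: "t \<le> Suc T"
  shows "0 \<le> Aa y \<pi> i t" "0 \<le> Bb y \<pi> i t"
proof -
  have h: "\<And>\<tau>. \<tau> \<in> {1..<t} \<Longrightarrow> 0 \<le> \<pi> \<tau> i \<and> (y \<tau> = 0 \<or> y \<tau> = 1)"
  proof -
    fix \<tau> assume "\<tau> \<in> {1..<t}"
    then have "\<tau> \<in> {1..T}" using t by auto
    then show "0 \<le> \<pi> \<tau> i \<and> (y \<tau> = 0 \<or> y \<tau> = 1)" using run_props[OF run _ i] ys by auto
  qed
  show "0 \<le> Aa y \<pi> i t" unfolding Aa_def by (intro sum_nonneg) (use h in force)
  show "0 \<le> Bb y \<pi> i t" unfolding Bb_def by (intro sum_nonneg) (use h in force)
qed

lemma expert_regret:
  assumes run: "bm_log_run K T y \<pi>" and ys: "\<forall>t\<in>{1..T}. y t \<in> {0, 1}" and i: "i \<le> K"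
  defines "a \<equiv> Aa y \<pi> i (Suc T)" and "b \<equiv> Bb y \<pi> i (Suc T)"
  shows "(\<Sum>t\<in>{1..T}. \<pi> t i * logloss (wmean_bm y \<pi> t i) (y t))
    \<le> - (a * ln (a / (a + b)) + b * ln (1 - a / (a + b))) + 1 + ln (16 * max (a + b) 1)"
proof -
  define \<Lambda> where "\<Lambda> t = ln (integral {0<..<1} (gfun (Aa y \<pi> i t) (Bb y \<pi> i t)))" for t
  have step: "\<pi> t i * logloss (wmean_bm y \<pi> t i) (y t) \<le> \<Lambda> t - \<Lambda> (Suc t)" if t: "t \<in> {1..T}" for t
  proof -
    have t1: "1 \<le> t" using t by simp
    have eA: "Aa y \<pi> i (Suc t) = Aa y \<pi> i t + \<pi> t i * y t"
      unfolding Aa_def using t1 by (simp add: sum.atLeastLessThan_Suc)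
    have eB: "Bb y \<pi> i (Suc t) = Bb y \<pi> i t + \<pi> t i * (1 - y t)"
      unfolding Bb_def using t1 by (simp add: sum.atLeastLessThan_Suc)
    have tT: "t \<le> Suc T" using t by simp
    show ?thesis
      unfolding \<Lambda>_def eA eB wmean_gmean
      by (rule regret_step[OF AB_nonneg[OF run ys i tT] run_props[OF run t i]]) (use ys t in auto)
  qed
  have "(\<Sum>t\<in>{1..T}. \<pi> t i * logloss (wmean_bm y \<pi> t i) (y t)) \<le> (\<Sum>t\<in>{1..T}. \<Lambda> t - \<Lambda> (Suc t))"
    by (rule sum_mono) (rule step)
  also have "\<dots> = \<Lambda> 1 - \<Lambda> (Suc T)"
    using sum_Suc_diff[of 1 T "\<lambda>t. - \<Lambda> t"] by simp
  also have "\<Lambda> 1 = 0"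
  proof -
    have "gfun (Aa y \<pi> i 1) (Bb y \<pi> i 1) = (\<lambda>w. 1)"
      by (simp add: Aa_def Bb_def gfun_def fun_eq_iff)
    then show ?thesis by (simp add: \<Lambda>_def integral_one)
  qed
  also have "0 - \<Lambda> (Suc T) \<le> - (a * ln (a / (a + b)) + b * ln (1 - a / (a + b))) + 1 + ln (16 * max (a + b) 1)"
  proof -
    have a0: "0 \<le> a" "0 \<le> b" using AB_nonneg[OF run ys i, of "Suc T"] by (auto simp: a_def b_def)
    define E where "E = exp (a * ln (a / (a + b)) + b * ln (1 - a / (a + b)) - 1) / (16 * max (a + b) 1)"
    have E0: "0 < E" by (simp add: E_def)
    have "E \<le> integral {0<..<1} (gfun a b)" unfolding E_def by (rule gfun_integral_lower[OF a0])
    then have "ln E \<le> \<Lambda> (Suc T)" using E0 by (simp add: \<Lambda>_def a_def b_def)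
    moreover have "ln E = a * ln (a / (a + b)) + b * ln (1 - a / (a + b)) - 1 - ln (16 * max (a + b) 1)"
      by (simp add: E_def ln_div)
    ultimately show ?thesis by simp
  qed
  finally show ?thesis by simp
qed


lemma round_step:
  assumes K: "2 \<le> K" and run: "bm_log_run K T y \<pi>" and ys: "\<forall>t\<in>{1..T}. y t \<in> {0, 1}" and t: "t \<in> {1..T}"
  shows "(\<Sum>i\<le>K. \<pi> t i * logloss (zgrid K i) (y t))
      \<le> (\<Sum>i\<le>K. \<pi> t i * logloss (wmean_bm y \<pi> t i) (y t)) + 100 / (real K)^2"
proof -
  have fp: "\<And>j. j \<le> K \<Longrightarrow> (\<Sum>i\<le>K. rround K (wmean_bm y \<pi> t i) j * \<pi> t i) = \<pi> t j"
    and s1: "(\<Sum>i\<le>K. \<pi> t i) = 1"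
    using run t unfolding bm_log_run_def by auto
  have w01: "0 < wmean_bm y \<pi> t i \<and> wmean_bm y \<pi> t i < 1" if i: "i \<le> K" for i
  proof -
    have tT: "t \<le> Suc T" using t by simp
    show ?thesis unfolding wmean_gmean using gmean_bounds[OF AB_nonneg[OF run ys i tT]] by simp
  qed
  have "(\<Sum>j\<le>K. \<pi> t j * logloss (zgrid K j) (y t))
      = (\<Sum>j\<le>K. (\<Sum>i\<le>K. rround K (wmean_bm y \<pi> t i) j * \<pi> t i) * logloss (zgrid K j) (y t))"
    by (rule sum.cong) (simp_all add: fp)
  also have "\<dots> = (\<Sum>i\<le>K. \<pi> t i * (\<Sum>j\<le>K. rround K (wmean_bm y \<pi> t i) j * logloss (zgrid K j) (y t)))"
  proof -
    have "(\<Sum>j\<le>K. (\<Sum>i\<le>K. rround K (wmean_bm y \<pi> t i) j * \<pi> t i) * logloss (zgrid K j) (y t))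
        = (\<Sum>j\<le>K. \<Sum>i\<le>K. \<pi> t i * (rround K (wmean_bm y \<pi> t i) j * logloss (zgrid K j) (y t)))"
      by (intro sum.cong refl) (simp add: sum_distrib_right sum_distrib_left mult_ac)
    also have "\<dots> = (\<Sum>i\<le>K. \<Sum>j\<le>K. \<pi> t i * (rround K (wmean_bm y \<pi> t i) j * logloss (zgrid K j) (y t)))"
      by (rule sum.swap)
    also have "\<dots> = (\<Sum>i\<le>K. \<pi> t i * (\<Sum>j\<le>K. rround K (wmean_bm y \<pi> t i) j * logloss (zgrid K j) (y t)))"
      by (simp add: sum_distrib_left)
    finally show ?thesis .
  qed
  also have "\<dots> \<le> (\<Sum>i\<le>K. \<pi> t i * (logloss (wmean_bm y \<pi> t i) (y t) + 100 / (real K)^2))"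
  proof (rule sum_mono)
    fix i assume i: "i \<in> {..K}"
    show "\<pi> t i * (\<Sum>j\<le>K. rround K (wmean_bm y \<pi> t i) j * logloss (zgrid K j) (y t))
        \<le> \<pi> t i * (logloss (wmean_bm y \<pi> t i) (y t) + 100 / (real K)^2)"
      using i w01[of i] run_props[OF run t, of i] ys t
      by (intro mult_left_mono rround_err[OF K]) auto
  qed
  also have "\<dots> = (\<Sum>i\<le>K. \<pi> t i * logloss (wmean_bm y \<pi> t i) (y t)) + 100 / (real K)^2"
  proof -
    have "(\<Sum>i\<le>K. \<pi> t i * (logloss (wmean_bm y \<pi> t i) (y t) + 100 / (real K)^2))
      = (\<Sum>i\<le>K. \<pi> t i * logloss (wmean_bm y \<pi> t i) (y t)) + (\<Sum>i\<le>K. \<pi> t i) * (100 / (real K)^2)"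
      by (simp only: distrib_left sum.distrib sum_distrib_right)
    then show ?thesis using s1 by simp
  qed
  finally show ?thesis .
qed

lemma main_bound:
  assumes K: "2 \<le> K" and T: "1 \<le> T" and run: "bm_log_run K T y \<pi>" and ys: "\<forall>t\<in>{1..T}. y t \<in> {0, 1}"
  shows "PKLCal K T y \<pi> \<le> real T * (100 / (real K)^2) + real (Suc K) * (1 + ln (16 * real T))"
proof -
  define R where "R = 1 + ln (16 * real T)"
  have per: "(\<Sum>t\<in>{1..T}. \<pi> t i * bernKL (rho_tilde T y \<pi> i) (zgrid K i))
      \<le> (\<Sum>t\<in>{1..T}. \<pi> t i * logloss (zgrid K i) (y t) - \<pi> t i * logloss (wmean_bm y \<pi> t i) (y t)) + R"
    if i: "i \<le> K" for i
  proof -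
    define a where "a = Aa y \<pi> i (Suc T)"
    define b where "b = Bb y \<pi> i (Suc T)"
    have ea: "a = (\<Sum>t\<in>{1..T}. \<pi> t i * y t)" by (simp add: a_def Aa_def atLeastLessThanSuc_atLeastAtMost)
    have eb: "b = (\<Sum>t\<in>{1..T}. \<pi> t i * (1 - y t))" by (simp add: b_def Bb_def atLeastLessThanSuc_atLeastAtMost)
    have kl: "(\<Sum>t\<in>{1..T}. \<pi> t i * bernKL (rho_tilde T y \<pi> i) (zgrid K i))
       = (\<Sum>t\<in>{1..T}. \<pi> t i * logloss (zgrid K i) (y t)) + (a * ln (a / (a + b)) + b * ln (1 - a / (a + b)))"
      unfolding rho_tilde_def ea eb
      by (rule kl_identity) (use run_props[OF run _ i] ys zgrid_01[OF K] in auto)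
    have er: "(\<Sum>t\<in>{1..T}. \<pi> t i * logloss (wmean_bm y \<pi> t i) (y t))
      \<le> - (a * ln (a / (a + b)) + b * ln (1 - a / (a + b))) + 1 + ln (16 * max (a + b) 1)"
      unfolding a_def b_def by (rule expert_regret[OF run ys i])
    have nT: "max (a + b) 1 \<le> real T"
    proof -
      have "a + b = (\<Sum>t\<in>{1..T}. \<pi> t i)" unfolding ea eb by (simp add: sum.distrib[symmetric] algebra_simps)
      also have "\<dots> \<le> (\<Sum>t\<in>{1..T}. 1)" by (rule sum_mono) (use run_props[OF run _ i] in auto)
      finally show ?thesis using T by simp
    qed
    have "ln (16 * max (a + b) 1) \<le> ln (16 * real T)"
      using nT by (subst ln_le_cancel_iff) auto
    then show ?thesis using kl er by (simp add: R_def sum_subtractf)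
  qed
  have "PKLCal K T y \<pi> \<le> (\<Sum>i\<le>K. (\<Sum>t\<in>{1..T}. \<pi> t i * logloss (zgrid K i) (y t) - \<pi> t i * logloss (wmean_bm y \<pi> t i) (y t)) + R)"
    unfolding PKLCal_def by (rule sum_mono) (use per in auto)
  also have "\<dots> = (\<Sum>t\<in>{1..T}. (\<Sum>i\<le>K. \<pi> t i * logloss (zgrid K i) (y t)) - (\<Sum>i\<le>K. \<pi> t i * logloss (wmean_bm y \<pi> t i) (y t))) + real (Suc K) * R"
  proof -
    have sw1: "(\<Sum>i\<le>K. \<Sum>t\<in>{1..T}. \<pi> t i * logloss (zgrid K i) (y t)) = (\<Sum>t\<in>{1..T}. \<Sum>i\<le>K. \<pi> t i * logloss (zgrid K i) (y t))"
      by (rule sum.swap)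
    have sw2: "(\<Sum>i\<le>K. \<Sum>t\<in>{1..T}. \<pi> t i * logloss (wmean_bm y \<pi> t i) (y t)) = (\<Sum>t\<in>{1..T}. \<Sum>i\<le>K. \<pi> t i * logloss (wmean_bm y \<pi> t i) (y t))"
      by (rule sum.swap)
    show ?thesis by (simp only: sum.distrib sum_subtractf sw1 sw2) simp
  qed
  also have "\<dots> \<le> (\<Sum>t\<in>{1..T}. 100 / (real K)^2) + real (Suc K) * R"
  proof -
    have "\<And>t. t \<in> {1..T} \<Longrightarrow> (\<Sum>i\<le>K. \<pi> t i * logloss (zgrid K i) (y t)) - (\<Sum>i\<le>K. \<pi> t i * logloss (wmean_bm y \<pi> t i) (y t)) \<le> 100 / (real K)^2"
      using round_step[OF K run ys] by fastforce
    then show ?thesis by (intro add_right_mono sum_mono) blast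
  qed
  finally show ?thesis by (simp add: R_def)
qed


lemma final_arith:
  fixes T K :: nat
  assumes T: "3 \<le> T"
    and K: "K = max 2 (nat \<lfloor>(real T / ln (real T)) powr (1/3)\<rfloor>) \<or>
            K = max 2 (nat \<lceil>(real T / ln (real T)) powr (1/3)\<rceil>)"
  shows "real T * (100 / (real K)^2) + real (Suc K) * (1 + ln (16 * real T))
         \<le> 500 * real T powr (1/3) * ln (real T) powr (2/3)"
proof -
  define L where "L = ln (real T)"
  define X where "X = (real T / L) powr (1/3)"
  define P where "P = real T powr (1/3) * L powr (2/3)"
  have T0: "0 < real T" using T by simp
  have L1: "1 \<le> L"
  proof -
    have "exp 1 \<le> real T" using exp_le T by linarith
    then have "ln (exp 1) \<le> ln (real T)" using T0 by (subst ln_le_cancel_iff) auto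
    then show ?thesis by (simp add: L_def)
  qed
  have L0: "0 < L" using L1 by simp
  have LT: "L \<le> real T" unfolding L_def using ln_bound[OF T0] .
  have X0: "0 < X" using T0 L0 by (simp add: X_def)
  have P0: "0 < P" using T0 L0 by (simp add: P_def)
  have L13: "L = L powr (1/3) * L powr (2/3)"
    using L0 by (simp add: powr_add[symmetric])
  have T13: "real T = real T powr (1/3) * real T powr (2/3)"
    using T0 by (simp add: powr_add[symmetric])
  have XX: "X^2 = real T powr (2/3) / L powr (2/3)"
  proof -
    have "X^2 = X powr 2" using X0 by (simp add: powr_numeral)
    also have "\<dots> = (real T / L) powr (2/3)" unfolding X_def using T0 L0 by (simp add: powr_powr)
    also have "\<dots> = real T powr (2/3) / L powr (2/3)" using T0 L0 by (simp add: powr_divide)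
    finally show ?thesis .
  qed
  have a: "real T / X^2 = P"
    unfolding XX P_def using T0 L0
    by (subst T13) (simp add: field_simps)
  have b: "X * L = P"
  proof -
    have "X = real T powr (1/3) / L powr (1/3)" unfolding X_def using T0 L0 by (simp add: powr_divide)
    then show ?thesis unfolding P_def using L0 by (subst L13) (simp add: field_simps)
  qed
  have c: "L \<le> P"
  proof -
    have "L powr (1/3) \<le> real T powr (1/3)" using LT L0 by (intro powr_mono2) auto
    then have "L powr (1/3) * L powr (2/3) \<le> real T powr (1/3) * L powr (2/3)"
      by (intro mult_right_mono) auto
    then show ?thesis using L13 by (simp add: P_def)
  qed
  have Kb: "X / 2 \<le> real K \<and> real K \<le> X + 2 \<and> 2 \<le> real K"
    using K
  proof
    assume k: "K = max 2 (nat \<lfloor>(real T / ln (real T)) powr (1/3)\<rfloor>)"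
    have f: "real (nat \<lfloor>X\<rfloor>) = of_int \<lfloor>X\<rfloor>" using X0 by simp
    have f1: "X - 1 \<le> of_int \<lfloor>X\<rfloor>" "of_int \<lfloor>X\<rfloor> \<le> X" by linarith+
    have k': "real K = max 2 (real (nat \<lfloor>X\<rfloor>))" using k by (simp add: X_def L_def)
    have m: "X / 2 \<le> max 2 (real_of_int \<lfloor>X\<rfloor>) \<and> max 2 (real_of_int \<lfloor>X\<rfloor>) \<le> X + 2 \<and> 2 \<le> max 2 (real_of_int \<lfloor>X\<rfloor>)"
    proof (cases "2 \<le> real_of_int \<lfloor>X\<rfloor>")
      case True
      then have "max 2 (real_of_int \<lfloor>X\<rfloor>) = real_of_int \<lfloor>X\<rfloor>" by simp
      then show ?thesis using f1 True by linarith
    next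
      case False
      then have "max 2 (real_of_int \<lfloor>X\<rfloor>) = 2" by simp
      then show ?thesis using f1 False X0 by linarith
    qed
    show ?thesis unfolding k' f using m by simp
  next
    assume k: "K = max 2 (nat \<lceil>(real T / ln (real T)) powr (1/3)\<rceil>)"
    have f: "real (nat \<lceil>X\<rceil>) = of_int \<lceil>X\<rceil>" using X0 by simp
    have f1: "X \<le> of_int \<lceil>X\<rceil>" "of_int \<lceil>X\<rceil> \<le> X + 1" by linarith+
    have k': "real K = max 2 (real (nat \<lceil>X\<rceil>))" using k by (simp add: X_def L_def)
    have m: "X / 2 \<le> max 2 (real_of_int \<lceil>X\<rceil>) \<and> max 2 (real_of_int \<lceil>X\<rceil>) \<le> X + 2 \<and> 2 \<le> max 2 (real_of_int \<lceil>X\<rceil>)"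
    proof (cases "2 \<le> real_of_int \<lceil>X\<rceil>")
      case True
      then have "max 2 (real_of_int \<lceil>X\<rceil>) = real_of_int \<lceil>X\<rceil>" by simp
      then show ?thesis using f1 True X0 by linarith
    next
      case False
      then have "max 2 (real_of_int \<lceil>X\<rceil>) = 2" by simp
      then show ?thesis using f1 False X0 by linarith
    qed
    show ?thesis unfolding k' f using m by simp
  qed
  have K0: "0 < real K" using Kb by simp
  have t1: "real T * (100 / (real K)^2) \<le> 400 * P"
  proof -
    have "(X / 2)^2 \<le> (real K)^2" using Kb X0 by (intro power_mono) auto
    then have "real T / (real K)^2 \<le> real T / (X / 2)^2"
      using X0 T0 by (intro divide_left_mono) auto
    also have "\<dots> = 4 * (real T / X^2)" by (simp add: power_divide)
    finally have "real T / (real K)^2 \<le> 4 * P" unfolding a .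
    moreover have "real T * (100 / (real K)^2) = 100 * (real T / (real K)^2)" by simp
    ultimately show ?thesis by linarith
  qed
  have l16: "ln (16 * real T) \<le> 4 + L"
  proof -
    have "ln (16 * real T) = ln 16 + L" using T0 by (simp add: ln_mult L_def)
    moreover have "ln (16::real) = 4 * ln 2"
      using ln_realpow[of 2 4] by simp
    moreover have "ln (2::real) \<le> 1" using ln_bound[of 2] ln_2_less_1 by simp
    ultimately show ?thesis by simp
  qed
  have t2: "real (Suc K) * (1 + ln (16 * real T)) \<le> 100 * P"
  proof -
    have "1 + ln (16 * real T) \<le> 6 * L" using l16 L1 by simp
    moreover have "0 \<le> 1 + ln (16 * real T)" using T0 by simp
    ultimately have "real (Suc K) * (1 + ln (16 * real T)) \<le> (X + 3) * (6 * L)"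
      using Kb by (intro mult_mono) auto
    also have "\<dots> = 6 * (X * L) + 18 * L" by (simp add: algebra_simps)
    also have "\<dots> \<le> 6 * P + 18 * P" unfolding b using c by simp
    finally show ?thesis using P0 by simp
  qed
  have "real T * (100 / (real K)^2) + real (Suc K) * (1 + ln (16 * real T)) \<le> 500 * P"
    using t1 t2 by simp
  then show ?thesis by (simp add: P_def L_def mult.assoc)
qed

theorem theorem2:
  shows "\<exists>C::real. \<forall>(T::nat) (K::nat) (y::nat \<Rightarrow> real) (\<pi>::nat \<Rightarrow> nat \<Rightarrow> real).
           3 \<le> T \<longrightarrow>
           (K = max 2 (nat \<lfloor>(real T / ln (real T)) powr (1/3)\<rfloor>) \<or>
            K = max 2 (nat \<lceil>(real T / ln (real T)) powr (1/3)\<rceil>)) \<longrightarrow>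
           (\<forall>t\<in>{1..T}. y t \<in> {0, 1}) \<longrightarrow>
           bm_log_run K T y \<pi> \<longrightarrow>
           PKLCal K T y \<pi> \<le> C * real T powr (1/3) * ln (real T) powr (2/3)"
proof (intro exI[of _ 500] allI impI)
  fix T K :: nat and y :: "nat \<Rightarrow> real" and \<pi> :: "nat \<Rightarrow> nat \<Rightarrow> real"
  assume T: "3 \<le> T"
    and K: "K = max 2 (nat \<lfloor>(real T / ln (real T)) powr (1/3)\<rfloor>) \<or>
            K = max 2 (nat \<lceil>(real T / ln (real T)) powr (1/3)\<rceil>)"
    and ys: "\<forall>t\<in>{1..T}. y t \<in> {0, 1}"
    and run: "bm_log_run K T y \<pi>"
  have K2: "2 \<le> K" using K by auto
  have T1: "1 \<le> T" using T by simp
  have "PKLCal K T y \<pi> \<le> real T * (100 / (real K)^2) + real (Suc K) * (1 + ln (16 * real T))"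
    by (rule main_bound[OF K2 T1 run ys])
  also have "\<dots> \<le> 500 * real T powr (1/3) * ln (real T) powr (2/3)"
    by (rule final_arith[OF T K])
  finally show "PKLCal K T y \<pi> \<le> 500 * real T powr (1/3) * ln (real T) powr (2/3)" .
qed

end
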